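(* Let $i\in\{1,2\}$ and let $(X,e,\mu)$ be an $\mathrm{NP}_i$-digital H-space with $X$ $\mathrm{NP}_i$-irreducible. Then for every $x\in X_e$, the maps $\mu_x$ and $\nu_x$ are isomorphisms $X\to X$.
   Context: A digital image is a finite set $X\subset\mathbb{Z}^n$ with a reflexive symmetric adjacency relation (a finite reflexive graph); continuous maps send adjacent points to adjacent points; an isomorphism is a continuous bijection with continuous inverse. On products, $\mathrm{NP}_u$ declares two tuples adjacent iff coordinates are adjacent in at most $u$ positions and equal elsewhere. An $\mathrm{NP}_i$-homotopy from $f$ to $g:X\to Y$ is an $\mathrm{NP}_i$-continuous $H:X\times[0,m]_{\mathbb{Z}}\to Y$ with $H(\cdot,0)=f$, $H(\cdot,m)=g$; write $f\simeq_i g$. $X$ is $\mathrm{NP}_i$-irreducible if it is not $\mathrm{NP}_i$-homotopy equivalent to a digital image with fewer points. $(f,g)(x)=(f(x),g(x))$; $c_e$ is constant at $e$. An $\mathrm{NP}_i$-digital H-space is $(X,e,\mu)$ with $\mu:X\times X\to X$ $\mathrm{NP}_i$-continuous, $\mu\circ(\mathrm{id}_X,c_e)\simeq_i\mathrm{id}_X$, $\mu\circ(c_e,\mathrm{id}_X)\simeq_i\mathrm{id}_X$ (homotopies need not be pointed). $\mu_x(y)=\mu(x,y)$, $\nu_x(y)=\mu(y,x)$; $X_e$ is the connected component of $e$. *)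

theory Defs
  imports Main
begin

text \<open>Points of Z^n are represented as integer lists of length n.\<close>

type_synonym pt = "int list"

definition digital_image :: "pt set \<Rightarrow> (pt \<Rightarrow> pt \<Rightarrow> bool) \<Rightarrow> bool" where
  "digital_image X adj \<longleftrightarrow> finite X \<and> (\<exists>n. \<forall>x\<in>X. length x = n)
     \<and> (\<forall>x\<in>X. adj x x) \<and> (\<forall>x\<in>X. \<forall>y\<in>X. adj x y \<longrightarrow> adj y x)"

definition dcont :: "'a set \<Rightarrow> ('a \<Rightarrow> 'a \<Rightarrow> bool) \<Rightarrow> 'b set \<Rightarrow> ('b \<Rightarrow> 'b \<Rightarrow> bool) \<Rightarrow> ('a \<Rightarrow> 'b) \<Rightarrow> bool" where
  "dcont X adjX Y adjY f \<longleftrightarrow> (\<forall>x\<in>X. f x \<in> Y) \<and> (\<forall>x\<in>X. \<forall>y\<in>X. adjX x y \<longrightarrow> adjY (f x) (f y))"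

definition diso :: "'a set \<Rightarrow> ('a \<Rightarrow> 'a \<Rightarrow> bool) \<Rightarrow> 'b set \<Rightarrow> ('b \<Rightarrow> 'b \<Rightarrow> bool) \<Rightarrow> ('a \<Rightarrow> 'b) \<Rightarrow> bool" where
  "diso X adjX Y adjY f \<longleftrightarrow> bij_betw f X Y \<and> dcont X adjX Y adjY f \<and> dcont Y adjY X adjX (inv_into X f)"

text \<open>NP_u adjacency on a product of two images: coordinates adjacent
  (adjacency is reflexive), and they differ in at most u positions.\<close>
definition NP :: "nat \<Rightarrow> ('a \<Rightarrow> 'a \<Rightarrow> bool) \<Rightarrow> ('b \<Rightarrow> 'b \<Rightarrow> bool) \<Rightarrow> 'a \<times> 'b \<Rightarrow> 'a \<times> 'b \<Rightarrow> bool" where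
  "NP u adjA adjB p q \<longleftrightarrow> adjA (fst p) (fst q) \<and> adjB (snd p) (snd q)
     \<and> (if fst p \<noteq> fst q then 1 else 0) + (if snd p \<noteq> snd q then 1 else 0) \<le> u"

definition int_adj :: "int \<Rightarrow> int \<Rightarrow> bool" where
  "int_adj s t \<longleftrightarrow> \<bar>s - t\<bar> \<le> 1"

definition np_homotopic :: "nat \<Rightarrow> 'a set \<Rightarrow> ('a \<Rightarrow> 'a \<Rightarrow> bool) \<Rightarrow> 'b set \<Rightarrow> ('b \<Rightarrow> 'b \<Rightarrow> bool)
    \<Rightarrow> ('a \<Rightarrow> 'b) \<Rightarrow> ('a \<Rightarrow> 'b) \<Rightarrow> bool" where
  "np_homotopic i X adjX Y adjY f g \<longleftrightarrow>
     (\<exists>(m::int) H. 0 \<le> m \<and> dcont (X \<times> {0..m}) (NP i adjX int_adj) Y adjY H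
        \<and> (\<forall>x\<in>X. H (x, 0) = f x) \<and> (\<forall>x\<in>X. H (x, m) = g x))"

definition np_htpy_equiv :: "nat \<Rightarrow> 'a set \<Rightarrow> ('a \<Rightarrow> 'a \<Rightarrow> bool) \<Rightarrow> 'b set \<Rightarrow> ('b \<Rightarrow> 'b \<Rightarrow> bool) \<Rightarrow> bool" where
  "np_htpy_equiv i X adjX Y adjY \<longleftrightarrow>
     (\<exists>f g. dcont X adjX Y adjY f \<and> dcont Y adjY X adjX g
        \<and> np_homotopic i X adjX X adjX (g \<circ> f) id
        \<and> np_homotopic i Y adjY Y adjY (f \<circ> g) id)"

definition np_irreducible :: "nat \<Rightarrow> pt set \<Rightarrow> (pt \<Rightarrow> pt \<Rightarrow> bool) \<Rightarrow> bool" where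
  "np_irreducible i X adj \<longleftrightarrow>
     \<not> (\<exists>Y adjY. digital_image Y adjY \<and> card Y < card X \<and> np_htpy_equiv i X adj Y adjY)"

definition np_hspace :: "nat \<Rightarrow> pt set \<Rightarrow> (pt \<Rightarrow> pt \<Rightarrow> bool) \<Rightarrow> pt \<Rightarrow> (pt \<Rightarrow> pt \<Rightarrow> pt) \<Rightarrow> bool" where
  "np_hspace i X adj e \<mu> \<longleftrightarrow> e \<in> X
     \<and> dcont (X \<times> X) (NP i adj adj) X adj (\<lambda>(x, y). \<mu> x y)
     \<and> np_homotopic i X adj X adj (\<lambda>x. \<mu> x e) id
     \<and> np_homotopic i X adj X adj (\<lambda>x. \<mu> e x) id"

definition component :: "'a set \<Rightarrow> ('a \<Rightarrow> 'a \<Rightarrow> bool) \<Rightarrow> 'a \<Rightarrow> 'a set" where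
  "component X adj e = {x \<in> X. (\<lambda>a b. a \<in> X \<and> b \<in> X \<and> adj a b)\<^sup>*\<^sup>* e x}"

end

theory Submission
  imports Defs "HOL-Library.FuncSet"
begin

lemma htpy_agree:
  assumes "\<forall>x\<in>X. f x = g x" "dcont X adjX Y adjY g"
  shows "np_homotopic i X adjX Y adjY f g"
  unfolding np_homotopic_def
proof (intro exI[of _ "0::int"] exI[of _ "\<lambda>(x,t). g x"] conjI)
  show "dcont (X \<times> {0..0}) (NP i adjX int_adj) Y adjY (\<lambda>(x, t). g x)"
    using assms(2) unfolding dcont_def NP_def by auto
qed (use assms in auto)

lemma htpy_comp:
  assumes "dcont Y adjY Z adjZ g" "np_homotopic i X adjX Y adjY f f'"
  shows "np_homotopic i X adjX Z adjZ (g \<circ> f) (g \<circ> f')"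
proof -
  obtain m H where H: "0 \<le> m" "dcont (X \<times> {0..m}) (NP i adjX int_adj) Y adjY H"
    "\<forall>x\<in>X. H (x, 0) = f x" "\<forall>x\<in>X. H (x, m) = f' x"
    using assms(2) unfolding np_homotopic_def by blast
  show ?thesis unfolding np_homotopic_def
    apply (rule exI[of _ m], rule exI[of _ "g \<circ> H"])
    using H assms(1) unfolding dcont_def by auto
qed

lemma htpy_trans:
  assumes "np_homotopic i X adjX Y adjY f g" "np_homotopic i X adjX Y adjY g h"
  shows "np_homotopic i X adjX Y adjY f h"
proof -
  obtain m1 H1 where H1: "0 \<le> m1" "dcont (X \<times> {0..m1}) (NP i adjX int_adj) Y adjY H1"
    "\<forall>x\<in>X. H1 (x, 0) = f x" "\<forall>x\<in>X. H1 (x, m1) = g x"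
    using assms(1) unfolding np_homotopic_def by blast
  obtain m2 H2 where H2: "0 \<le> m2" "dcont (X \<times> {0..m2}) (NP i adjX int_adj) Y adjY H2"
    "\<forall>x\<in>X. H2 (x, 0) = g x" "\<forall>x\<in>X. H2 (x, m2) = h x"
    using assms(2) unfolding np_homotopic_def by blast
  define H where "H = (\<lambda>(x,t). if t \<le> m1 then H1 (x,t) else H2 (x, t - m1))"
  have E1: "H (x,t) = H1 (x,t)" if "t \<le> m1" for x t using that H_def by auto
  have E2: "H (x,t) = H2 (x,t - m1)" if "x \<in> X" "m1 \<le> t" for x t
    using that H1(4) H2(3) H_def by auto
  have D: "dcont (X \<times> {0..m1+m2}) (NP i adjX int_adj) Y adjY H"
    unfolding dcont_def
  proof (intro conjI ballI impI)
    fix p assume p: "p \<in> X \<times> {0..m1+m2}"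
    then obtain x t where pe: "p = (x,t)" "x \<in> X" "0 \<le> t" "t \<le> m1+m2" by auto
    show "H p \<in> Y"
    proof (cases "t \<le> m1")
      case True thus ?thesis using pe E1 H1(2) unfolding dcont_def by auto
    next
      case False thus ?thesis using pe E2[of x t] H2(2) unfolding dcont_def by auto
    qed
  next
    fix p q assume p: "p \<in> X \<times> {0..m1+m2}" and q: "q \<in> X \<times> {0..m1+m2}"
      and a: "NP i adjX int_adj p q"
    obtain x t where pe: "p = (x,t)" "x \<in> X" "0 \<le> t" "t \<le> m1+m2" using p by auto
    obtain y s where qe: "q = (y,s)" "y \<in> X" "0 \<le> s" "s \<le> m1+m2" using q by auto
    have ts: "\<bar>t - s\<bar> \<le> 1" using a pe qe unfolding NP_def int_adj_def by auto
    show "adjY (H p) (H q)"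
    proof (cases "t \<le> m1 \<and> s \<le> m1")
      case True thus ?thesis using pe qe E1 H1(2) a unfolding dcont_def by auto
    next
      case False
      hence tm: "m1 \<le> t" "m1 \<le> s" using ts by auto
      have "NP i adjX int_adj (x, t - m1) (y, s - m1)" using a pe qe
        unfolding NP_def int_adj_def by auto
      thus ?thesis using pe qe E2[of x t] E2[of y s] tm H2(2) H1(1) unfolding dcont_def
        by auto
    qed
  qed
  show ?thesis unfolding np_homotopic_def
    apply (rule exI[of _ "m1+m2"], rule exI[of _ H])
    using D H1 H2 E1 E2 by auto
qed

lemma dcont_funpow:
  assumes "dcont X adj X adj f"
  shows "dcont X adj X adj (f ^^ n)"
  by (induction n) (use assms in \<open>auto simp: dcont_def\<close>)

lemma htpy_funpow:
  assumes "dcont X adj X adj f" "np_homotopic i X adj X adj f id"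
  shows "np_homotopic i X adj X adj (f ^^ n) id"
proof (induction n)
  case 0
  show ?case by (rule htpy_agree) (auto simp: dcont_def)
next
  case (Suc n)
  have "np_homotopic i X adj X adj (f ^^ n \<circ> f) (f ^^ n \<circ> id)"
    by (rule htpy_comp[OF dcont_funpow[OF assms(1)] assms(2)])
  hence "np_homotopic i X adj X adj (f ^^ Suc n) (f ^^ n)"
    by (simp only: funpow_Suc_right comp_id)
  thus ?case using Suc htpy_trans by blast
qed

lemma idem_power:
  assumes "finite X" "\<forall>x\<in>X. f x \<in> X"
  shows "\<exists>N\<ge>1. \<forall>x\<in>X. (f ^^ N) ((f ^^ N) x) = (f ^^ N) x"
proof -
  define F where "F n = restrict (f ^^ n) X" for n
  have inF: "F n \<in> X \<rightarrow>\<^sub>E X" for n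
  proof -
    have "(f ^^ n) x \<in> X" if "x \<in> X" for x using that assms(2)
      by (induction n) auto
    thus ?thesis unfolding F_def by auto
  qed
  have "range F \<subseteq> X \<rightarrow>\<^sub>E X" using inF by auto
  moreover have "finite (X \<rightarrow>\<^sub>E X)" by (rule finite_PiE) (use assms(1) in auto)
  ultimately have "finite (range F)" using finite_subset by blast
  hence "\<not> inj F" using finite_imageD[of F UNIV] by auto
  then obtain a b where ab: "a \<noteq> b" "F a = F b" unfolding inj_def by auto
  obtain a b where ab: "a < b" "F a = F b"
  proof (cases "a < b")
    case True thus ?thesis using that ab by blast
  next
    case False thus ?thesis using that[of b a] ab by auto
  qed
  have eqab: "(f ^^ a) x = (f ^^ b) x" if "x \<in> X" for x
    using ab(2) that unfolding F_def by (metis restrict_apply')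
  define d where "d = b - a"
  have dpos: "d \<ge> 1" using ab d_def by auto
  have step: "(f ^^ (n + d)) x = (f ^^ n) x" if "a \<le> n" "x \<in> X" for n x
  proof -
    define t where "t = n - a"
    have t: "n = t + a" using that(1) t_def by simp
    have "n + d = t + b" using t ab d_def by auto
    hence "(f ^^ (n + d)) x = (f ^^ t) ((f ^^ b) x)" by (simp add: funpow_add)
    also have "\<dots> = (f ^^ t) ((f ^^ a) x)" using eqab that by simp
    also have "\<dots> = (f ^^ n) x" using t by (simp add: funpow_add)
    finally show ?thesis .
  qed
  have steps: "(f ^^ (n + j * d)) x = (f ^^ n) x" if "a \<le> n" "x \<in> X" for n j x
  proof (induction j)
    case (Suc j)
    have "(f ^^ (n + Suc j * d)) x = (f ^^ ((n + j * d) + d)) x" by (simp add: algebra_simps)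
    also have "\<dots> = (f ^^ (n + j * d)) x" using step that by simp
    finally show ?case using Suc by simp
  qed simp
  define N where "N = (a + 1) * d"
  have "(a+1)*1 \<le> (a+1)*d" using dpos by (rule mult_le_mono2)
  hence N1: "N \<ge> 1" "a \<le> N" using N_def by auto
  have "\<forall>x\<in>X. (f ^^ N) ((f ^^ N) x) = (f ^^ N) x"
  proof
    fix x assume x: "x \<in> X"
    have "(f ^^ N) ((f ^^ N) x) = (f ^^ (N + (a+1) * d)) x"
      using N_def by (simp add: funpow_add)
    also have "\<dots> = (f ^^ N) x" using steps N1 x by blast
    finally show "(f ^^ N) ((f ^^ N) x) = (f ^^ N) x" .
  qed
  thus ?thesis using N1 by blast
qed

lemma irred_surj:
  assumes di: "digital_image X adj" and irr: "np_irreducible i X adj"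
    and fc: "dcont X adj X adj f" and fh: "np_homotopic i X adj X adj f id"
  shows "f ` X = X"
proof (rule ccontr)
  assume ne: "f ` X \<noteq> X"
  have fin: "finite X" using di unfolding digital_image_def by auto
  have fX: "f ` X \<subseteq> X" using fc unfolding dcont_def by auto
  have fX': "\<forall>x\<in>X. f x \<in> X" using fX by auto
  have cf: "card (f ` X) < card X" using ne fX fin psubset_card_mono[of X "f ` X"] by blast
  obtain N where N: "N \<ge> 1" "\<forall>x\<in>X. (f ^^ N) ((f ^^ N) x) = (f ^^ N) x"
    using idem_power[OF fin fX'] by blast
  define r where "r = f ^^ N"
  define Y where "Y = r ` X"
  have rc: "dcont X adj X adj r" using dcont_funpow[OF fc] r_def by simp
  have YX: "Y \<subseteq> X" using rc unfolding Y_def dcont_def by auto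
  obtain k where k: "N = Suc k" using N(1) by (metis Suc_le_D One_nat_def)
  have fkX: "(f ^^ k) x \<in> X" if "x \<in> X" for x
    using dcont_funpow[OF fc, of k] that unfolding dcont_def by auto
  have "Y \<subseteq> f ` X"
  proof
    fix y assume "y \<in> Y"
    then obtain x where x: "x \<in> X" "y = r x" unfolding Y_def by auto
    hence "y = f ((f ^^ k) x)" using r_def k by simp
    thus "y \<in> f ` X" using fkX x by auto
  qed
  moreover have "finite (f ` X)" using fin by simp
  ultimately have "card Y \<le> card (f ` X)" using card_mono by blast
  hence cY: "card Y < card X" using cf by linarith
  have diY: "digital_image Y adj" using di YX finite_subset[OF YX] unfolding digital_image_def
    by blast
  have rcY: "dcont X adj Y adj r" using rc unfolding dcont_def Y_def by auto
  have icY: "dcont Y adj X adj id" using YX unfolding dcont_def by auto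
  have h1: "np_homotopic i X adj X adj (id \<circ> r) id"
    using htpy_funpow[OF fc fh, of N] r_def by simp
  have h2: "np_homotopic i Y adj Y adj (r \<circ> id) id"
    by (rule htpy_agree) (use N(2) r_def Y_def in \<open>auto simp: dcont_def\<close>)
  have "np_htpy_equiv i X adj Y adj"
    unfolding np_htpy_equiv_def using rcY icY h1 h2 by blast
  thus False using irr diY cY unfolding np_irreducible_def by blast
qed

lemma surj_iso:
  assumes di: "digital_image X adj" and fc: "dcont X adj X adj f" and su: "f ` X = X"
  shows "diso X adj X adj f"
proof -
  have fin: "finite X" using di unfolding digital_image_def by auto
  have inj: "inj_on f X" using su fin by (simp add: inj_on_iff_eq_card)
  define E where "E = {(a,b). a \<in> X \<and> b \<in> X \<and> adj a b}"
  define \<phi> where "\<phi> = (\<lambda>(a,b). (f a, f b))"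
  have "E \<subseteq> X \<times> X" unfolding E_def by auto
  hence finE: "finite E" using fin finite_subset by blast
  have "\<phi> ` E \<subseteq> E" using fc unfolding \<phi>_def E_def dcont_def by auto
  moreover have "inj_on \<phi> E" using inj unfolding \<phi>_def E_def inj_on_def by auto
  ultimately have EE: "\<phi> ` E = E" using endo_inj_surj finE by blast
  have ic: "dcont X adj X adj (inv_into X f)"
    unfolding dcont_def
  proof (intro conjI ballI impI)
    fix u assume "u \<in> X" thus "inv_into X f u \<in> X" using su by (metis inv_into_into)
  next
    fix u v assume uv: "u \<in> X" "v \<in> X" "adj u v"
    hence "(u,v) \<in> \<phi> ` E" using EE E_def by auto
    then obtain a b where ab: "a \<in> X" "b \<in> X" "adj a b" "u = f a" "v = f b"
      unfolding \<phi>_def E_def by auto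
    thus "adj (inv_into X f u) (inv_into X f v)" using inv_into_f_f[OF inj] by simp
  qed
  show ?thesis unfolding diso_def bij_betw_def using inj su fc ic by blast
qed


lemma step_htpy_left:
  assumes di: "digital_image X adj" and hs: "np_hspace i X adj e \<mu>"
    and ab: "a \<in> X" "b \<in> X" "adj a b"
  shows "np_homotopic i X adj X adj (\<lambda>y. \<mu> b y) (\<lambda>y. \<mu> a y)"
proof -
  have mc: "dcont (X \<times> X) (NP i adj adj) X adj (\<lambda>(x, y). \<mu> x y)"
    using hs unfolding np_hspace_def by blast
  have refl: "\<forall>x\<in>X. adj x x" and sym: "\<forall>x\<in>X. \<forall>y\<in>X. adj x y \<longrightarrow> adj y x"
    using di unfolding digital_image_def by auto
  define H where "H = (\<lambda>(y, t::int). \<mu> (if t = 0 then b else a) y)"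
  have D: "dcont (X \<times> {0..1}) (NP i adj int_adj) X adj H"
    unfolding dcont_def
  proof (intro conjI ballI impI)
    fix p assume "p \<in> X \<times> {0..(1::int)}"
    thus "H p \<in> X" using mc ab unfolding H_def dcont_def by auto
  next
    fix p q assume p: "p \<in> X \<times> {0..(1::int)}" and q: "q \<in> X \<times> {0..(1::int)}"
      and pq: "NP i adj int_adj p q"
    obtain y t where pe: "p = (y,t)" "y \<in> X" using p by auto
    obtain y' s where qe: "q = (y',s)" "y' \<in> X" using q by auto
    define c where "c = (if t = 0 then b else a)"
    define c' where "c' = (if s = 0 then b else a)"
    have cX: "c \<in> X" "c' \<in> X" using ab c_def c'_def by auto
    have "adj c c'" using refl sym ab cX c_def c'_def by auto
    moreover have "(if c \<noteq> c' then 1 else 0) \<le> (if t \<noteq> s then 1 else (0::nat))"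
      using c_def c'_def by auto
    ultimately have "NP i adj adj (c, y) (c', y')" using pq pe qe unfolding NP_def by auto
    hence "adj (\<mu> c y) (\<mu> c' y')" using mc cX pe qe unfolding dcont_def by auto
    thus "adj (H p) (H q)" using pe qe c_def c'_def H_def by simp
  qed
  show ?thesis unfolding np_homotopic_def
    by (rule exI[of _ 1], rule exI[of _ H]) (use D H_def in auto)
qed

lemma step_htpy_right:
  assumes di: "digital_image X adj" and hs: "np_hspace i X adj e \<mu>"
    and ab: "a \<in> X" "b \<in> X" "adj a b"
  shows "np_homotopic i X adj X adj (\<lambda>y. \<mu> y b) (\<lambda>y. \<mu> y a)"
proof -
  have mc: "dcont (X \<times> X) (NP i adj adj) X adj (\<lambda>(x, y). \<mu> x y)"
    using hs unfolding np_hspace_def by blast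
  have refl: "\<forall>x\<in>X. adj x x" and sym: "\<forall>x\<in>X. \<forall>y\<in>X. adj x y \<longrightarrow> adj y x"
    using di unfolding digital_image_def by auto
  define H where "H = (\<lambda>(y, t::int). \<mu> y (if t = 0 then b else a))"
  have D: "dcont (X \<times> {0..1}) (NP i adj int_adj) X adj H"
    unfolding dcont_def
  proof (intro conjI ballI impI)
    fix p assume "p \<in> X \<times> {0..(1::int)}"
    thus "H p \<in> X" using mc ab unfolding H_def dcont_def by auto
  next
    fix p q assume p: "p \<in> X \<times> {0..(1::int)}" and q: "q \<in> X \<times> {0..(1::int)}"
      and pq: "NP i adj int_adj p q"
    obtain y t where pe: "p = (y,t)" "y \<in> X" using p by auto
    obtain y' s where qe: "q = (y',s)" "y' \<in> X" using q by auto
    define c where "c = (if t = 0 then b else a)"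
    define c' where "c' = (if s = 0 then b else a)"
    have cX: "c \<in> X" "c' \<in> X" using ab c_def c'_def by auto
    have "adj c c'" using refl sym ab cX c_def c'_def by auto
    moreover have "(if c \<noteq> c' then 1 else 0) \<le> (if t \<noteq> s then 1 else (0::nat))"
      using c_def c'_def by auto
    ultimately have "NP i adj adj (y, c) (y', c')" using pq pe qe unfolding NP_def by auto
    hence "adj (\<mu> y c) (\<mu> y' c')" using mc cX pe qe unfolding dcont_def by auto
    thus "adj (H p) (H q)" using pe qe c_def c'_def H_def by simp
  qed
  show ?thesis unfolding np_homotopic_def
    by (rule exI[of _ 1], rule exI[of _ H]) (use D H_def in auto)
qed

theorem mainTheorem8:
  fixes i :: nat and X :: "pt set" and adj :: "pt \<Rightarrow> pt \<Rightarrow> bool"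
    and e :: pt and \<mu> :: "pt \<Rightarrow> pt \<Rightarrow> pt"
  assumes "i \<in> {1, 2}"
    and "digital_image X adj"
    and "np_hspace i X adj e \<mu>"
    and "np_irreducible i X adj"
    and "x \<in> component X adj e"
  shows "diso X adj X adj (\<lambda>y. \<mu> x y) \<and> diso X adj X adj (\<lambda>y. \<mu> y x)"
proof -
  note di = assms(2) and hs = assms(3)
  have i1: "1 \<le> i" using assms(1) by auto
  have mc: "dcont (X \<times> X) (NP i adj adj) X adj (\<lambda>(x, y). \<mu> x y)"
    using hs unfolding np_hspace_def by blast
  have refl: "\<forall>x\<in>X. adj x x"
    using di unfolding digital_image_def by auto
  have xX: "x \<in> X" and path: "(\<lambda>a b. a \<in> X \<and> b \<in> X \<and> adj a b)\<^sup>*\<^sup>* e x"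
    using assms(5) unfolding component_def by auto
  have eX: "e \<in> X" using hs unfolding np_hspace_def by auto
  have H: "np_homotopic i X adj X adj (\<lambda>y. \<mu> z y) id \<and> np_homotopic i X adj X adj (\<lambda>y. \<mu> y z) id"
    if "(\<lambda>a b. a \<in> X \<and> b \<in> X \<and> adj a b)\<^sup>*\<^sup>* e z" for z
    using that
  proof (induction rule: rtranclp_induct)
    case base
    show ?case using hs unfolding np_hspace_def by blast
  next
    case (step b c)
    then show ?case
      using htpy_trans[OF step_htpy_left[OF di hs, of b c]]
        htpy_trans[OF step_htpy_right[OF di hs, of b c]] by blast
  qed
  have c1: "dcont X adj X adj (\<lambda>y. \<mu> x y)"
    unfolding dcont_def
  proof (intro conjI ballI impI)
    fix y assume "y \<in> X" thus "\<mu> x y \<in> X" using mc xX unfolding dcont_def by auto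
  next
    fix y y' assume yy: "y \<in> X" "y' \<in> X" "adj y y'"
    have "NP i adj adj (x, y) (x, y')" using yy refl xX i1 unfolding NP_def by auto
    thus "adj (\<mu> x y) (\<mu> x y')" using mc xX yy unfolding dcont_def by auto
  qed
  have c2: "dcont X adj X adj (\<lambda>y. \<mu> y x)"
    unfolding dcont_def
  proof (intro conjI ballI impI)
    fix y assume "y \<in> X" thus "\<mu> y x \<in> X" using mc xX unfolding dcont_def by auto
  next
    fix y y' assume yy: "y \<in> X" "y' \<in> X" "adj y y'"
    have "NP i adj adj (y, x) (y', x)" using yy refl xX i1 unfolding NP_def by auto
    thus "adj (\<mu> y x) (\<mu> y' x)" using mc xX yy unfolding dcont_def by auto
  qed
  show ?thesis
    using surj_iso[OF di c1 irred_surj[OF di assms(4) c1]]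
      surj_iso[OF di c2 irred_surj[OF di assms(4) c2]] H[OF path] by blast
qed

end
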